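(* Let $X$ be a nonempty compact convex subset of $\mathbb{R}^n$, let $\varphi:X\to\mathbb{R}$ be upper semicontinuous and strongly concave on $X$ with modulus $c>0$, and let $\psi:X\to\mathbb{R}$ be Lipschitz continuous with constant $L_\psi$ with respect to the Euclidean norm. Then $\varphi$ attains its maximum on $X$ at a unique point $x_0$, and for every $\delta\geq0$, \[ \Big|\sup_{x\in X}\big(\varphi(x)+\delta\psi(x)\big)-\big(\varphi(x_0)+\delta\psi(x_0)\big)\Big|\leq L_\psi\,\delta\sqrt{\frac{2\delta M}{c}}, \] where $M=\sup_X\psi-\inf_X\psi$.
   Context: $\varphi$ is strongly concave on $X$ with modulus $c$ if $-\varphi-\frac c2\|\cdot\|_2^2$ is convex on $X$. *)

theory Defs
  imports "HOL-Analysis.Analysis"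
begin

definition usc_on :: "'a::metric_space set \<Rightarrow> ('a \<Rightarrow> real) \<Rightarrow> bool" where
  "usc_on S f \<longleftrightarrow> (\<forall>x\<in>S. \<forall>a. f x < a \<longrightarrow>
      (\<exists>e>0. \<forall>y\<in>S. dist y x < e \<longrightarrow> f y < a))"

definition strongly_concave_on :: "'a::real_normed_vector set \<Rightarrow> real \<Rightarrow> ('a \<Rightarrow> real) \<Rightarrow> bool" where
  "strongly_concave_on S c f \<longleftrightarrow> convex_on S (\<lambda>x. - f x - c / 2 * (norm x)\<^sup>2)"

end

theory Submission
  imports Defs
begin

lemma usc_attains_max:
  fixes X :: "'a::metric_space set"
  assumes "X \<noteq> {}" "compact X" "usc_on X f"
  shows "\<exists>x0\<in>X. \<forall>x\<in>X. f x \<le> f x0"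
proof (rule ccontr)
  assume na: "\<not> ?thesis"
  have "\<forall>x\<in>X. \<exists>p. fst p \<in> X \<and> snd p > 0 \<and> (\<forall>y\<in>X. dist y x < snd p \<longrightarrow> f y < f (fst p))"
  proof
    fix x assume x: "x \<in> X"
    then obtain x' where x': "x' \<in> X" "f x < f x'" using na by (meson not_le)
    then obtain e where "e > 0" "\<forall>y\<in>X. dist y x < e \<longrightarrow> f y < f x'"
      using assms(3) x unfolding usc_on_def by blast
    then show "\<exists>p. fst p \<in> X \<and> snd p > 0 \<and> (\<forall>y\<in>X. dist y x < snd p \<longrightarrow> f y < f (fst p))"
      using x' by (intro exI[of _ "(x', e)"]) auto
  qed
  then obtain P where P: "\<And>x. x \<in> X \<Longrightarrow> fst (P x) \<in> X \<and> snd (P x) > 0 \<and>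
      (\<forall>y\<in>X. dist y x < snd (P x) \<longrightarrow> f y < f (fst (P x)))"
    by metis
  have cov: "X \<subseteq> (\<Union>x\<in>X. ball x (snd (P x)))"
    using P by (auto simp: dist_commute)
  obtain C where C: "C \<subseteq> X" "finite C" "X \<subseteq> (\<Union>x\<in>C. ball x (snd (P x)))"
    using compactE_image[OF assms(2) _ cov] by blast
  have Cne: "C \<noteq> {}" using C(3) assms(1) by auto
  obtain j where j: "j \<in> C" "\<forall>i\<in>C. f (fst (P i)) \<le> f (fst (P j))"
  proof -
    let ?g = "\<lambda>i. f (fst (P i))"
    have "Max (?g ` C) \<in> ?g ` C" using C(2) Cne by (intro Max_in) auto
    then obtain j where "j \<in> C" "?g j = Max (?g ` C)" by auto
    moreover have "\<forall>i\<in>C. ?g i \<le> Max (?g ` C)" using C(2) by auto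
    ultimately show ?thesis using that by auto
  qed
  have "fst (P j) \<in> X" using P C(1) j(1) by blast
  then obtain i where i: "i \<in> C" "fst (P j) \<in> ball i (snd (P i))" using C(3) by blast
  then have "f (fst (P j)) < f (fst (P i))"
    using P[of i] C(1) \<open>fst (P j) \<in> X\<close> by (auto simp: dist_commute)
  with j(2) i(1) show False by fastforce
qed

lemma norm_comb_identity:
  fixes a b :: "'a::real_inner"
  shows "(norm ((1 - t) *\<^sub>R a + t *\<^sub>R b))\<^sup>2 =
    (1 - t) * (norm a)\<^sup>2 + t * (norm b)\<^sup>2 - t * (1 - t) * (norm (b - a))\<^sup>2"
  by (simp add: power2_norm_eq_inner inner_simps algebra_simps inner_commute)

lemma quad_growth:
  fixes X :: "'a::real_inner set"
  assumes cs: "strongly_concave_on X c \<phi>" and x0: "x0 \<in> X" "\<forall>x\<in>X. \<phi> x \<le> \<phi> x0"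
    and x: "x \<in> X" and c: "c > 0"
  shows "c / 2 * (norm (x - x0))\<^sup>2 \<le> \<phi> x0 - \<phi> x"
proof -
  let ?A = "\<phi> x0 - \<phi> x" and ?B = "c / 2 * (norm (x - x0))\<^sup>2"
  have cv: "convex_on X (\<lambda>x. - \<phi> x - c / 2 * (norm x)\<^sup>2)"
    using cs unfolding strongly_concave_on_def .
  have key: "(1 - t) * ?B \<le> ?A" if t: "0 < t" "t < 1" for t
  proof -
    let ?z = "(1 - t) *\<^sub>R x0 + t *\<^sub>R x"
    have "- \<phi> ?z - c / 2 * (norm ?z)\<^sup>2 \<le> (1 - t) * (- \<phi> x0 - c / 2 * (norm x0)\<^sup>2) + t * (- \<phi> x - c / 2 * (norm x)\<^sup>2)"
      using convex_onD[OF cv, of t x0 x] t x0 x by auto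
    moreover have "?z \<in> X"
      using cv x0(1) x t unfolding convex_on_def by (meson convexD less_eq_real_def diff_ge_0_iff_ge add_diff_cancel_left' diff_add_cancel)
    then have "\<phi> ?z \<le> \<phi> x0" using x0 by auto
    ultimately have "t * ?A \<ge> t * ((1 - t) * ?B)"
      unfolding norm_comb_identity by (simp add: algebra_simps) (simp add: field_simps; linarith)
    then show ?thesis using t by simp
  qed
  show ?thesis
  proof (rule ccontr)
    assume "\<not> ?thesis"
    then have lt: "?A < ?B" by simp
    have A0: "0 \<le> ?A" using x0 x by auto
    define t where "t = (?B - ?A) / (2 * ?B)"
    have Bp: "?B > 0" using lt A0 by linarith
    have "0 < t" "t < 1" using lt A0 Bp unfolding t_def by (auto simp: field_simps)
    then have "(1 - t) * ?B \<le> ?A" by (rule key)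
    moreover have "(1 - t) * ?B = (?A + ?B) / 2"
    proof -
      have "\<And>A B::real. B > 0 \<Longrightarrow> (1 - (B - A) / (2 * B)) * B = (A + B) / 2"
        by (simp add: field_simps)
      then show ?thesis using Bp unfolding t_def by blast
    qed
    moreover have "\<And>a b p::real. p \<le> a \<Longrightarrow> p = (a + b) / 2 \<Longrightarrow> a < b \<Longrightarrow> False"
      by (auto simp: field_simps)
    ultimately show False using lt by blast
  qed
qed

theorem corollary5p13:
  fixes X :: "(real ^ 'n) set" and \<phi> \<psi> :: "real ^ 'n \<Rightarrow> real" and c L :: real
  assumes "X \<noteq> {}" and "compact X" and "convex X"
    and "usc_on X \<phi>" and "c > 0" and "strongly_concave_on X c \<phi>"
    and "lipschitz_on L X \<psi>"
  shows "\<exists>x0\<in>X. (\<forall>x\<in>X. \<phi> x \<le> \<phi> x0)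
     \<and> (\<forall>y\<in>X. (\<forall>x\<in>X. \<phi> x \<le> \<phi> y) \<longrightarrow> y = x0)
     \<and> (\<forall>\<delta>::real. \<delta> \<ge> 0 \<longrightarrow>
          \<bar>(SUP x\<in>X. \<phi> x + \<delta> * \<psi> x) - (\<phi> x0 + \<delta> * \<psi> x0)\<bar>
            \<le> L * \<delta> * sqrt (2 * \<delta> * ((SUP x\<in>X. \<psi> x) - (INF x\<in>X. \<psi> x)) / c))"
proof -
  obtain x0 where x0: "x0 \<in> X" "\<forall>x\<in>X. \<phi> x \<le> \<phi> x0"
    using usc_attains_max[OF assms(1,2,4)] by blast
  have qg: "\<And>x. x \<in> X \<Longrightarrow> c / 2 * (norm (x - x0))\<^sup>2 \<le> \<phi> x0 - \<phi> x"
    using quad_growth[OF assms(6) x0 _ assms(5)] by blast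
  have uniq: "\<forall>y\<in>X. (\<forall>x\<in>X. \<phi> x \<le> \<phi> y) \<longrightarrow> y = x0"
  proof (intro ballI impI)
    fix y assume y: "y \<in> X" "\<forall>x\<in>X. \<phi> x \<le> \<phi> y"
    have "c / 2 * (norm (y - x0))\<^sup>2 \<le> 0" using qg[OF y(1)] y(2) x0(1) by fastforce
    then have "(norm (y - x0))\<^sup>2 \<le> 0" using assms(5)
      by (simp add: mult_le_0_iff)
    then show "y = x0" by simp
  qed
  have L0: "0 \<le> L" using assms(7) by (rule lipschitz_on_nonneg)
  have cont: "continuous_on X \<psi>" using assms(7) by (rule lipschitz_on_continuous_on)
  have bd: "bounded (\<psi> ` X)" using compact_continuous_image[OF cont assms(2)] compact_imp_bounded by blast
  have ba: "bdd_above (\<psi> ` X)" and bb: "bdd_below (\<psi> ` X)"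
    using bd bounded_imp_bdd_above bounded_imp_bdd_below by auto
  define M where "M = (SUP x\<in>X. \<psi> x) - (INF x\<in>X. \<psi> x)"
  have Mle: "\<And>x y. x \<in> X \<Longrightarrow> y \<in> X \<Longrightarrow> \<psi> x - \<psi> y \<le> M"
  proof -
    fix x y assume "x \<in> X" "y \<in> X"
    then have "\<psi> x \<le> (SUP x\<in>X. \<psi> x)" "(INF x\<in>X. \<psi> x) \<le> \<psi> y"
      using cSUP_upper[OF _ ba] cINF_lower[OF bb] by auto
    then show "\<psi> x - \<psi> y \<le> M" unfolding M_def by linarith
  qed
  have M0: "0 \<le> M" using Mle[OF x0(1) x0(1)] by simp
  have main: "\<bar>(SUP x\<in>X. \<phi> x + \<delta> * \<psi> x) - (\<phi> x0 + \<delta> * \<psi> x0)\<bar>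
            \<le> L * \<delta> * sqrt (2 * \<delta> * M / c)" if d: "\<delta> \<ge> 0" for \<delta> :: real
  proof -
    define R where "R = L * \<delta> * sqrt (2 * \<delta> * M / c)"
    have R0: "0 \<le> R" unfolding R_def using L0 d M0 assms(5) by simp
    have pt: "\<phi> x + \<delta> * \<psi> x \<le> \<phi> x0 + \<delta> * \<psi> x0 + R" if x: "x \<in> X" for x
    proof (cases "\<phi> x + \<delta> * \<psi> x \<le> \<phi> x0 + \<delta> * \<psi> x0")
      case True then show ?thesis using R0 by linarith
    next
      case False
      then have h1: "\<phi> x0 - \<phi> x \<le> \<delta> * (\<psi> x - \<psi> x0)" by (simp add: algebra_simps)
      have "\<delta> * (\<psi> x - \<psi> x0) \<le> \<delta> * M" using Mle[OF x x0(1)] d by (simp add: mult_left_mono)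
      with h1 qg[OF x] have "c / 2 * (norm (x - x0))\<^sup>2 \<le> \<delta> * M" by linarith
      then have "(norm (x - x0))\<^sup>2 \<le> 2 * \<delta> * M / c" using assms(5) by (simp add: field_simps)
      then have nd: "norm (x - x0) \<le> sqrt (2 * \<delta> * M / c)" by (rule real_le_rsqrt)
      have "\<psi> x - \<psi> x0 \<le> L * norm (x - x0)"
        using lipschitz_onD[OF assms(7) x x0(1)] by (simp add: dist_norm abs_le_iff)
      also have "\<dots> \<le> L * sqrt (2 * \<delta> * M / c)" using nd L0 by (simp add: mult_left_mono)
      finally have "\<delta> * (\<psi> x - \<psi> x0) \<le> \<delta> * (L * sqrt (2 * \<delta> * M / c))"
        using d by (simp add: mult_left_mono)
      then have "\<delta> * (\<psi> x - \<psi> x0) \<le> R" unfolding R_def by (simp add: algebra_simps)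
      moreover have "\<phi> x \<le> \<phi> x0" using x0(2) x by blast
      ultimately show ?thesis by (simp add: algebra_simps)
    qed
    have bF: "bdd_above ((\<lambda>x. \<phi> x + \<delta> * \<psi> x) ` X)"
      using pt unfolding bdd_above_def by blast
    have lo: "\<phi> x0 + \<delta> * \<psi> x0 \<le> (SUP x\<in>X. \<phi> x + \<delta> * \<psi> x)"
      using cSUP_upper[OF x0(1) bF] .
    have hi: "(SUP x\<in>X. \<phi> x + \<delta> * \<psi> x) \<le> \<phi> x0 + \<delta> * \<psi> x0 + R"
      using pt assms(1) by (intro cSUP_least) auto
    show ?thesis using lo hi unfolding R_def[symmetric] by linarith
  qed
  show ?thesis using x0 uniq main unfolding M_def by blast
qed

end
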